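(* Let $X=\{0,1\}$ with the graph $0-1$ (arrows $0\to1$ and $1\to0$), $A=\mathbb{F}_2(X)$, and take $\Omega^2=\Omega^1\otimes_A\Omega^1$ (no relations, $\wedge$ the identity map). Then there is a unique bimodule connection on $\Omega^1$ with invertible generalised braiding $\sigma$, namely $\nabla(01)=\nabla(10)=g$, $\sigma=\mathrm{id}$. This is also the unique metric compatible bimodule connection, and it has $T_\nabla=0$ (so it is a QLC) and $R_\nabla=0$.
   Context: Notation: $ij$ denotes the arrow $i\to j$ and $i_0i_1\cdots i_m$ the path $i_0\to i_1\to\cdots\to i_m$; $\Omega^1$ is the $\mathbb{F}_2$-vector space with basis the arrows, with bimodule structure $f\cdot(x\to y)\cdot h=f(x)h(y)\,(x\to y)$ and ${\rm d} f=\sum_{x\to y}(f(y)+f(x))\,x\to y$. Tensor powers $\Omega^1\otimes_A\cdots\otimes_A\Omega^1$ have basis the paths of the corresponding length, a path corresponding to the tensor product of its steps (tensor products of non-composable steps are zero). Let $\theta=01+10$; the differential on 1-forms is ${\rm d}\omega=\theta\otimes\omega+\omega\otimes\theta$. The quantum metric is $g=010+101$. A bimodule connection is a linear map $\nabla:\Omega^1\to\Omega^1\otimes_A\Omega^1$ with $\nabla(f\omega)={\rm d} f\otimes\omega+f\nabla\omega$ and $\nabla(\omega f)=(\nabla\omega)f+\sigma(\omega\otimes{\rm d} f)$ for some bimodule map $\sigma:\Omega^1\otimes_A\Omega^1\to\Omega^1\otimes_A\Omega^1$. It is metric compatible if $(\nabla\otimes\mathrm{id}+(\sigma\otimes\mathrm{id})(\mathrm{id}\otimes\nabla))g=0$.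 Torsion $T_\nabla=\wedge\nabla-{\rm d}$ and curvature $R_\nabla=({\rm d}\otimes\mathrm{id}-(\wedge\otimes\mathrm{id})(\mathrm{id}\otimes\nabla))\nabla:\Omega^1\to\Omega^2\otimes_A\Omega^1$ (signs irrelevant over $\mathbb{F}_2$). A QLC is a torsion free, metric compatible bimodule connection. *)

theory Defs
  imports Main "HOL-Library.Z2"
begin

text \<open>A differential form of degree n is a function on vertex lists, supported on
  the paths of length n (the basis of the n-fold tensor power of Omega1).\<close>

datatype pt = P0 | P1

definition arr :: "pt \<Rightarrow> pt \<Rightarrow> bool" where
  "arr x y \<longleftrightarrow> x \<noteq> y"

definition is_path :: "nat \<Rightarrow> pt list \<Rightarrow> bool" where
  "is_path n p \<longleftrightarrow> length p = Suc n \<and> (\<forall>i<n. arr (p ! i) (p ! Suc i))"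

type_synonym form = "pt list \<Rightarrow> bit"

definition Omega :: "nat \<Rightarrow> form set" where
  "Omega n = {\<omega>. \<forall>p. \<not> is_path n p \<longrightarrow> \<omega> p = 0}"

definition fadd :: "form \<Rightarrow> form \<Rightarrow> form" where
  "fadd \<omega> \<eta> = (\<lambda>p. \<omega> p + \<eta> p)"

definition fscale :: "bit \<Rightarrow> form \<Rightarrow> form" where
  "fscale c \<omega> = (\<lambda>p. c * \<omega> p)"

definition zero_form :: form where
  "zero_form = (\<lambda>p. 0)"

definition lmult :: "(pt \<Rightarrow> bit) \<Rightarrow> form \<Rightarrow> form" where
  "lmult f \<omega> = (\<lambda>p. f (hd p) * \<omega> p)"

definition rmult :: "form \<Rightarrow> (pt \<Rightarrow> bit) \<Rightarrow> form" where
  "rmult \<omega> h = (\<lambda>p. \<omega> p * h (last p))"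

text \<open>Tensor product over A of an m-form with another form (concatenation of paths).\<close>
definition tens :: "nat \<Rightarrow> form \<Rightarrow> form \<Rightarrow> form" where
  "tens m \<omega> \<eta> = (\<lambda>p. \<omega> (take (Suc m) p) * \<eta> (drop m p))"

definition basis :: "pt list \<Rightarrow> form" where
  "basis q = (\<lambda>p. if p = q then 1 else 0)"

definition paths :: "nat \<Rightarrow> pt list set" where
  "paths n = {p. is_path n p}"

definition d0 :: "(pt \<Rightarrow> bit) \<Rightarrow> form" where
  "d0 f = (\<lambda>p. if is_path 1 p then f (last p) + f (hd p) else 0)"

definition theta :: form where
  "theta = (\<lambda>p. if is_path 1 p then 1 else 0)"

definition d1 :: "form \<Rightarrow> form" where
  "d1 \<omega> = fadd (tens 1 theta \<omega>) (tens 1 \<omega> theta)"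

definition gmet :: form where
  "gmet = (\<lambda>p. if is_path 2 p then 1 else 0)"

definition lin_map :: "form set \<Rightarrow> form set \<Rightarrow> (form \<Rightarrow> form) \<Rightarrow> bool" where
  "lin_map S T F \<longleftrightarrow> (\<forall>x\<in>S. F x \<in> T)
     \<and> (\<forall>x\<in>S. \<forall>y\<in>S. F (fadd x y) = fadd (F x) (F y))
     \<and> (\<forall>c. \<forall>x\<in>S. F (fscale c x) = fscale c (F x))"

definition bimod_map2 :: "(form \<Rightarrow> form) \<Rightarrow> bool" where
  "bimod_map2 \<sigma> \<longleftrightarrow> lin_map (Omega 2) (Omega 2) \<sigma>
     \<and> (\<forall>f. \<forall>\<rho>\<in>Omega 2. \<sigma> (lmult f \<rho>) = lmult f (\<sigma> \<rho>))
     \<and> (\<forall>f. \<forall>\<rho>\<in>Omega 2. \<sigma> (rmult \<rho> f) = rmult (\<sigma> \<rho>) f)"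

definition bimod_conn :: "(form \<Rightarrow> form) \<Rightarrow> (form \<Rightarrow> form) \<Rightarrow> bool" where
  "bimod_conn N \<sigma> \<longleftrightarrow> lin_map (Omega 1) (Omega 2) N \<and> bimod_map2 \<sigma>
     \<and> (\<forall>f. \<forall>\<omega>\<in>Omega 1. N (lmult f \<omega>) = fadd (tens 1 (d0 f) \<omega>) (lmult f (N \<omega>)))
     \<and> (\<forall>f. \<forall>\<omega>\<in>Omega 1. N (rmult \<omega> f) = fadd (rmult (N \<omega>) f) (\<sigma> (tens 1 \<omega> (d0 f))))"

text \<open>(sigma (x) id) on Omega1 (x) Omega1 (x) Omega1, via the path basis.\<close>
definition sigma_id :: "(form \<Rightarrow> form) \<Rightarrow> form \<Rightarrow> form" where
  "sigma_id \<sigma> \<tau> = (\<lambda>r. \<Sum>q\<in>paths 3. \<tau> q * tens 2 (\<sigma> (basis (take 3 q))) (basis (drop 2 q)) r)"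

text \<open>(nabla (x) id + (sigma (x) id)(id (x) nabla)) applied to a 2-form, via the path basis.\<close>
definition nabla2 :: "(form \<Rightarrow> form) \<Rightarrow> (form \<Rightarrow> form) \<Rightarrow> form \<Rightarrow> form" where
  "nabla2 N \<sigma> \<rho> = (\<lambda>r. \<Sum>p\<in>paths 2. \<rho> p *
      (tens 2 (N (basis (take 2 p))) (basis (drop 1 p)) r
       + sigma_id \<sigma> (tens 1 (basis (take 2 p)) (N (basis (drop 1 p)))) r))"

definition metric_compat :: "(form \<Rightarrow> form) \<Rightarrow> (form \<Rightarrow> form) \<Rightarrow> bool" where
  "metric_compat N \<sigma> \<longleftrightarrow> nabla2 N \<sigma> gmet = zero_form"

text \<open>Omega2 = Omega1 (x) Omega1, wedge = identity; torsion T = wedge nabla - d.\<close>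
definition torsion :: "(form \<Rightarrow> form) \<Rightarrow> form \<Rightarrow> form" where
  "torsion N \<omega> = fadd (N \<omega>) (d1 \<omega>)"

text \<open>Curvature R = (d (x) id - (wedge (x) id)(id (x) nabla)) nabla, via the path basis.\<close>
definition curvature :: "(form \<Rightarrow> form) \<Rightarrow> form \<Rightarrow> form" where
  "curvature N \<omega> = (\<lambda>r. \<Sum>p\<in>paths 2. N \<omega> p *
      (tens 2 (d1 (basis (take 2 p))) (basis (drop 1 p)) r
       + tens 1 (basis (take 2 p)) (N (basis (drop 1 p))) r))"

definition nabla0 :: "form \<Rightarrow> form" where
  "nabla0 \<omega> = fscale (\<omega> [P0, P1] + \<omega> [P1, P0]) gmet"

end

theory Submission
  imports Defs
begin

definition mk1 :: "bit \<Rightarrow> bit \<Rightarrow> form" where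
  "mk1 x y = (\<lambda>p. if p = [P0,P1] then x else if p = [P1,P0] then y else 0)"
definition mk2 :: "bit \<Rightarrow> bit \<Rightarrow> form" where
  "mk2 x y = (\<lambda>p. if p = [P0,P1,P0] then x else if p = [P1,P0,P1] then y else 0)"
definition mk3 :: "bit \<Rightarrow> bit \<Rightarrow> form" where
  "mk3 x y = (\<lambda>p. if p = [P0,P1,P0,P1] then x else if p = [P1,P0,P1,P0] then y else 0)"

lemma arr_simps[simp]: "arr P0 P1" "arr P1 P0" "\<not> arr P0 P0" "\<not> arr P1 P1"
  by (auto simp: arr_def)

lemma path1: "is_path 1 p \<longleftrightarrow> p = [P0,P1] \<or> p = [P1,P0]"
proof
  assume "is_path 1 p"
  then obtain x y where p: "p = [x,y]" and "arr x y"
    by (auto simp: is_path_def length_Suc_conv)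
  then show "p = [P0,P1] \<or> p = [P1,P0]" by (cases x; cases y) auto
qed (auto simp: is_path_def)

lemma path1'[simp]: "is_path (Suc 0) p \<longleftrightarrow> p = [P0,P1] \<or> p = [P1,P0]"
  using path1 by simp

lemma path2: "is_path 2 p \<longleftrightarrow> p = [P0,P1,P0] \<or> p = [P1,P0,P1]"
proof
  assume h: "is_path 2 p"
  then obtain x y z where p: "p = [x,y,z]"
    by (auto simp: is_path_def length_Suc_conv numeral_2_eq_2)
  have "arr x y" "arr y z" using h p by (auto simp: is_path_def numeral_2_eq_2 less_Suc_eq)
  then show "p = [P0,P1,P0] \<or> p = [P1,P0,P1]" using p by (cases x; cases y; cases z) auto
qed (auto simp: is_path_def less_Suc_eq numeral_2_eq_2)

lemma path3: "is_path 3 p \<longleftrightarrow> p = [P0,P1,P0,P1] \<or> p = [P1,P0,P1,P0]"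
proof
  assume h: "is_path 3 p"
  then obtain x y z w where p: "p = [x,y,z,w]"
    by (auto simp: is_path_def length_Suc_conv numeral_3_eq_3)
  have "arr x y" "arr y z" "arr z w" using h p by (auto simp: is_path_def numeral_3_eq_3 less_Suc_eq)
  then show "p = [P0,P1,P0,P1] \<or> p = [P1,P0,P1,P0]" using p by (cases x; cases y; cases z; cases w) auto
qed (auto simp: is_path_def less_Suc_eq numeral_3_eq_3)

lemma paths2: "paths 2 = {[P0,P1,P0],[P1,P0,P1]}" by (auto simp: paths_def path2)
lemma paths3: "paths 3 = {[P0,P1,P0,P1],[P1,P0,P1,P0]}" by (auto simp: paths_def path3)

lemma O1: "\<omega> \<in> Omega 1 \<Longrightarrow> \<omega> = mk1 (\<omega> [P0,P1]) (\<omega> [P1,P0])"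
  by (rule ext) (auto simp: Omega_def mk1_def path1)
lemma O2: "\<omega> \<in> Omega 2 \<Longrightarrow> \<omega> = mk2 (\<omega> [P0,P1,P0]) (\<omega> [P1,P0,P1])"
  by (rule ext) (auto simp: Omega_def mk2_def path2)
lemma mk1_in[simp]: "mk1 x y \<in> Omega 1" by (auto simp: Omega_def mk1_def path1)
lemma mk1_in'[simp]: "mk1 x y \<in> Omega (Suc 0)" using mk1_in by simp
lemma mk2_in[simp]: "mk2 x y \<in> Omega 2" by (auto simp: Omega_def mk2_def path2)
lemma O1E: "\<omega> \<in> Omega 1 \<Longrightarrow> (\<And>x y. \<omega> = mk1 x y \<Longrightarrow> P) \<Longrightarrow> P" using O1 by blast
lemma O1E': "\<omega> \<in> Omega (Suc 0) \<Longrightarrow> (\<And>x y. \<omega> = mk1 x y \<Longrightarrow> P) \<Longrightarrow> P" using O1 by simp blast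
lemma O2E: "\<omega> \<in> Omega 2 \<Longrightarrow> (\<And>x y. \<omega> = mk2 x y \<Longrightarrow> P) \<Longrightarrow> P" using O2 by blast

lemma mk1_ap[simp]: "mk1 x y [P0,P1] = x" "mk1 x y [P1,P0] = y" by (auto simp: mk1_def)
lemma mk2_ap[simp]: "mk2 x y [P0,P1,P0] = x" "mk2 x y [P1,P0,P1] = y" by (auto simp: mk2_def)
lemma mk3_ap[simp]: "mk3 x y [P0,P1,P0,P1] = x" "mk3 x y [P1,P0,P1,P0] = y" by (auto simp: mk3_def)
lemma mk1_eq[simp]: "mk1 a b = mk1 c d \<longleftrightarrow> a = c \<and> b = d"
  by (metis mk1_ap)
lemma mk2_eq[simp]: "mk2 a b = mk2 c d \<longleftrightarrow> a = c \<and> b = d"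
  by (metis mk2_ap)
lemma mk3_eq[simp]: "mk3 a b = mk3 c d \<longleftrightarrow> a = c \<and> b = d"
  by (metis mk3_ap)

lemma fadd1[simp]: "fadd (mk1 a b) (mk1 c d) = mk1 (a+c) (b+d)" by (auto simp: fadd_def mk1_def fun_eq_iff)
lemma fadd2[simp]: "fadd (mk2 a b) (mk2 c d) = mk2 (a+c) (b+d)" by (auto simp: fadd_def mk2_def fun_eq_iff)
lemma fscale1[simp]: "fscale k (mk1 a b) = mk1 (k*a) (k*b)" by (auto simp: fscale_def mk1_def fun_eq_iff)
lemma fscale2[simp]: "fscale k (mk2 a b) = mk2 (k*a) (k*b)" by (auto simp: fscale_def mk2_def fun_eq_iff)
lemma lmult1[simp]: "lmult f (mk1 a b) = mk1 (f P0 * a) (f P1 * b)" by (auto simp: lmult_def mk1_def fun_eq_iff)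
lemma lmult2[simp]: "lmult f (mk2 a b) = mk2 (f P0 * a) (f P1 * b)" by (auto simp: lmult_def mk2_def fun_eq_iff)
lemma rmult1[simp]: "rmult (mk1 a b) f = mk1 (a * f P1) (b * f P0)" by (auto simp: rmult_def mk1_def fun_eq_iff)
lemma rmult2[simp]: "rmult (mk2 a b) f = mk2 (a * f P0) (b * f P1)" by (auto simp: rmult_def mk2_def fun_eq_iff)
lemma d0_mk: "d0 f = mk1 (f P1 + f P0) (f P0 + f P1)" by (auto simp: d0_def mk1_def fun_eq_iff path1)
lemma theta_mk: "theta = mk1 1 1" by (auto simp: theta_def mk1_def fun_eq_iff path1)
lemma gmet_mk: "gmet = mk2 1 1" by (auto simp: gmet_def mk2_def fun_eq_iff path2)
lemma zero_mk2: "zero_form = mk2 0 0" by (auto simp: zero_form_def mk2_def fun_eq_iff)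
lemma zero_mk3: "zero_form = mk3 0 0" by (auto simp: zero_form_def mk3_def fun_eq_iff)
lemma basis1[simp]: "basis [P0,P1] = mk1 1 0" "basis [P1,P0] = mk1 0 1" by (auto simp: basis_def mk1_def fun_eq_iff)
lemma basis2[simp]: "basis [P0,P1,P0] = mk2 1 0" "basis [P1,P0,P1] = mk2 0 1" by (auto simp: basis_def mk2_def fun_eq_iff)

lemma list_cases4: obtains "p = []" | x where "p = [x]" | x y where "p = [x,y]" | x y z where "p = [x,y,z]"
  | x y z w where "p = [x,y,z,w]" | x y z w v r where "p = x#y#z#w#v#r"
  by (metis list.exhaust)

lemma tens11[simp]: "tens 1 (mk1 x y) (mk1 u v) = mk2 (x*v) (y*u)"
  apply (rule ext) subgoal for p by (cases p rule: list_cases4) (auto simp: tens_def mk1_def mk2_def) done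
lemma tens11'[simp]: "tens (Suc 0) (mk1 x y) (mk1 u v) = mk2 (x*v) (y*u)"
  using tens11 by simp
lemma tens12[simp]: "tens 1 (mk1 x y) (mk2 u v) = mk3 (x*v) (y*u)"
  apply (rule ext) subgoal for p by (cases p rule: list_cases4) (auto simp: tens_def mk1_def mk2_def mk3_def) done
lemma tens12'[simp]: "tens (Suc 0) (mk1 x y) (mk2 u v) = mk3 (x*v) (y*u)"
  using tens12 by simp
lemma tens21[simp]: "tens 2 (mk2 x y) (mk1 u v) = mk3 (x*u) (y*v)"
  apply (rule ext) subgoal for p by (cases p rule: list_cases4) (auto simp: tens_def mk1_def mk2_def mk3_def numeral_2_eq_2) done


declare add_bit_eq_xor[simp del] mult_bit_eq_and[simp del]

lemma nabla0_mk[simp]: "nabla0 (mk1 x y) = mk2 (x+y) (x+y)"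
  by (simp add: nabla0_def gmet_mk)
lemma d1_mk[simp]: "d1 (mk1 x y) = mk2 (y+x) (x+y)"
  by (simp add: d1_def theta_mk)

lemma key:
  assumes "bimod_conn N \<sigma>"
  obtains a b where "\<And>x y. N (mk1 x y) = mk2 (x*a+y) (x+y*b)" "\<And>x y. \<sigma> (mk2 x y) = mk2 (x*a) (y*b)"
proof -
  have lin: "lin_map (Omega 1) (Omega 2) N" and sig: "bimod_map2 \<sigma>"
    and L: "\<forall>f. \<forall>\<omega>\<in>Omega 1. N (lmult f \<omega>) = fadd (tens 1 (d0 f) \<omega>) (lmult f (N \<omega>))"
    and R: "\<forall>f. \<forall>\<omega>\<in>Omega 1. N (rmult \<omega> f) = fadd (rmult (N \<omega>) f) (\<sigma> (tens 1 \<omega> (d0 f)))"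
    using assms by (auto simp: bimod_conn_def)
  have slin: "lin_map (Omega 2) (Omega 2) \<sigma>" using sig by (simp add: bimod_map2_def)
  have "N (mk1 1 0) \<in> Omega 2" using lin by (simp add: lin_map_def)
  then obtain a0 b0 where n0: "N (mk1 1 0) = mk2 a0 b0" using O2 by blast
  have "N (mk1 0 1) \<in> Omega 2" using lin by (simp add: lin_map_def)
  then obtain a1 b1 where n1: "N (mk1 0 1) = mk2 a1 b1" using O2 by blast
  have "\<sigma> (mk2 1 0) \<in> Omega 2" using slin by (simp add: lin_map_def)
  then obtain s0 t0 where s0: "\<sigma> (mk2 1 0) = mk2 s0 t0" using O2 by blast
  have "\<sigma> (mk2 0 1) \<in> Omega 2" using slin by (simp add: lin_map_def)
  then obtain s1 t1 where s1: "\<sigma> (mk2 0 1) = mk2 s1 t1" using O2 by blast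
  define e0 :: "pt \<Rightarrow> bit" where "e0 = (\<lambda>x. if x = P0 then 1 else 0)"
  define e1 :: "pt \<Rightarrow> bit" where "e1 = (\<lambda>x. if x = P1 then 1 else 0)"
  have "b0 = 1" using L[rule_format, where f=e0, OF mk1_in[of 1 0]] by (simp add: e0_def d0_mk n0)
  have "a1 = 1" using L[rule_format, where f=e1, OF mk1_in[of 0 1]] by (simp add: e1_def d0_mk n1)
  have "s0 = a0" "t0 = 0" using R[rule_format, where f=e1, OF mk1_in[of 1 0]] by (simp_all add: e1_def d0_mk n0 s0)
  have "s1 = 0" "t1 = b1" using R[rule_format, where f=e0, OF mk1_in[of 0 1]] by (simp_all add: e0_def d0_mk n1 s1)
  have la: "N (fadd u v) = fadd (N u) (N v)" if "u \<in> Omega 1" "v \<in> Omega 1" for u v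
    using lin that by (simp add: lin_map_def)
  have ls: "N (fscale c u) = fscale c (N u)" if "u \<in> Omega 1" for u c
    using lin that by (simp add: lin_map_def)
  have sa: "\<sigma> (fadd u v) = fadd (\<sigma> u) (\<sigma> v)" if "u \<in> Omega 2" "v \<in> Omega 2" for u v
    using slin that by (simp add: lin_map_def)
  have ss: "\<sigma> (fscale c u) = fscale c (\<sigma> u)" if "u \<in> Omega 2" for u c
    using slin that by (simp add: lin_map_def)
  show ?thesis
  proof
    fix x y
    have "N (mk1 x y) = N (fadd (mk1 x 0) (mk1 0 y))" by simp
    also have "\<dots> = fadd (N (mk1 x 0)) (N (mk1 0 y))" by (rule la) simp_all
    also have "N (mk1 x 0) = N (fscale x (mk1 1 0))" by simp
    also have "\<dots> = fscale x (N (mk1 1 0))" by (rule ls) simp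
    also have "N (mk1 0 y) = N (fscale y (mk1 0 1))" by simp
    also have "\<dots> = fscale y (N (mk1 0 1))" by (rule ls) simp
    finally show "N (mk1 x y) = mk2 (x*a0+y) (x+y*b1)"
      using \<open>b0 = 1\<close> \<open>a1 = 1\<close> by (simp add: n0 n1)
  next
    fix x y
    have "\<sigma> (mk2 x y) = \<sigma> (fadd (mk2 x 0) (mk2 0 y))" by simp
    also have "\<dots> = fadd (\<sigma> (mk2 x 0)) (\<sigma> (mk2 0 y))" by (rule sa) simp_all
    also have "\<sigma> (mk2 x 0) = \<sigma> (fscale x (mk2 1 0))" by simp
    also have "\<dots> = fscale x (\<sigma> (mk2 1 0))" by (rule ss) simp
    also have "\<sigma> (mk2 0 y) = \<sigma> (fscale y (mk2 0 1))" by simp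
    also have "\<dots> = fscale y (\<sigma> (mk2 0 1))" by (rule ss) simp
    finally show "\<sigma> (mk2 x y) = mk2 (x*a0) (y*b1)"
      using \<open>s0 = a0\<close> \<open>t0 = 0\<close> \<open>s1 = 0\<close> \<open>t1 = b1\<close> by (simp add: s0 s1)
  qed
qed


lemma bit_cases2: "(x::bit) = 0 \<or> x = 1" by (cases x) auto

lemma bit2: "(x::bit) + x = 0" "x + (x + y) = y" "x + (y + x) = y" "y + (x + x) = y"
  by (cases x; simp)+

lemma mk3_pt: "(\<lambda>r. mk3 a b r + mk3 c d r) = mk3 (a+c) (b+d)"
  by (auto simp: mk3_def fun_eq_iff)

lemma sigma_id_mk:
  assumes "\<And>x y. \<sigma> (mk2 x y) = mk2 (x*a) (y*b)"
  shows "sigma_id \<sigma> (mk3 c d) = mk3 (c*a) (d*b)"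
  by (auto simp: sigma_id_def paths3 assms fun_eq_iff mk3_def)

lemma nabla2_mk:
  assumes N: "\<And>x y. N (mk1 x y) = mk2 (x*a+y) (x+y*b)"
    and S: "\<And>x y. \<sigma> (mk2 x y) = mk2 (x*a) (y*b)"
  shows "nabla2 N \<sigma> gmet = mk3 (1+a*b) (1+a*b)"
  using sigma_id_mk[of \<sigma> a b, OF S]
  by (auto simp: nabla2_def paths2 gmet_mk N fun_eq_iff mk3_def)

lemma conn_ok:
  assumes N: "\<forall>\<omega>\<in>Omega 1. N \<omega> = nabla0 \<omega>" and S: "\<forall>\<rho>\<in>Omega 2. \<sigma> \<rho> = \<rho>"
  shows "bimod_conn N \<sigma>"
proof -
  have N': "N (mk1 x y) = mk2 (x+y) (x+y)" for x y using N by simp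
  have S': "\<sigma> (mk2 x y) = mk2 x y" for x y using S by simp
  have e: "\<And>x y u v. (x::bit) = u \<Longrightarrow> y = v \<Longrightarrow> mk2 x y = mk2 u v" by simp
  show ?thesis
    unfolding bimod_conn_def bimod_map2_def lin_map_def
    apply (intro conjI allI ballI)
    apply (auto elim!: O1E O1E' O2E simp: N' S' d0_mk)
    apply (simp_all add: algebra_simps bit2)
    done
qed

lemma conn_part:
  assumes "bimod_conn N \<sigma>"
  shows "metric_compat N \<sigma> \<longleftrightarrow> (\<forall>\<omega>\<in>Omega 1. N \<omega> = nabla0 \<omega>)"
proof -
  obtain a b where N: "\<And>x y. N (mk1 x y) = mk2 (x*a+y) (x+y*b)"
    and S: "\<And>x y. \<sigma> (mk2 x y) = mk2 (x*a) (y*b)" using key[OF assms] by blast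
  have "metric_compat N \<sigma> \<longleftrightarrow> a = 1 \<and> b = 1"
    unfolding metric_compat_def nabla2_mk[OF N S] zero_mk3
    using bit_cases2[of a] bit_cases2[of b] by auto
  moreover have "(\<forall>\<omega>\<in>Omega 1. N \<omega> = nabla0 \<omega>) \<longleftrightarrow> a = 1 \<and> b = 1"
  proof
    assume h: "\<forall>\<omega>\<in>Omega 1. N \<omega> = nabla0 \<omega>"
    from h[rule_format, OF mk1_in[of 1 0]] h[rule_format, OF mk1_in[of 0 1]]
    show "a = 1 \<and> b = 1" by (simp add: N)
  next
    assume "a = 1 \<and> b = 1"
    then show "\<forall>\<omega>\<in>Omega 1. N \<omega> = nabla0 \<omega>" by (auto elim!: O1E O1E' simp: N)
  qed
  ultimately show ?thesis by simp
qed

lemma bij_part: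
  "(bimod_conn N \<sigma> \<and> bij_betw \<sigma> (Omega 2) (Omega 2)) \<longleftrightarrow>
            ((\<forall>\<omega>\<in>Omega 1. N \<omega> = nabla0 \<omega>) \<and> (\<forall>\<rho>\<in>Omega 2. \<sigma> \<rho> = \<rho>))"
proof
  assume h: "bimod_conn N \<sigma> \<and> bij_betw \<sigma> (Omega 2) (Omega 2)"
  obtain a b where N: "\<And>x y. N (mk1 x y) = mk2 (x*a+y) (x+y*b)"
    and S: "\<And>x y. \<sigma> (mk2 x y) = mk2 (x*a) (y*b)" using key h by blast
  have inj: "inj_on \<sigma> (Omega 2)" using h by (simp add: bij_betw_def)
  have "a = 1"
  proof (rule ccontr)
    assume "a \<noteq> 1"
    then have "\<sigma> (mk2 1 0) = \<sigma> (mk2 0 0)" by (simp add: S)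
    then have "mk2 1 0 = mk2 0 0" using inj by (meson inj_onD mk2_in)
    then show False by simp
  qed
  have "b = 1"
  proof (rule ccontr)
    assume "b \<noteq> 1"
    then have "\<sigma> (mk2 0 1) = \<sigma> (mk2 0 0)" by (simp add: S)
    then have "mk2 0 1 = mk2 0 0" using inj by (meson inj_onD mk2_in)
    then show False by simp
  qed
  show "(\<forall>\<omega>\<in>Omega 1. N \<omega> = nabla0 \<omega>) \<and> (\<forall>\<rho>\<in>Omega 2. \<sigma> \<rho> = \<rho>)"
    using \<open>a = 1\<close> \<open>b = 1\<close> by (auto elim!: O1E O1E' O2E simp: N S)
next
  assume h: "(\<forall>\<omega>\<in>Omega 1. N \<omega> = nabla0 \<omega>) \<and> (\<forall>\<rho>\<in>Omega 2. \<sigma> \<rho> = \<rho>)"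
  then have "bimod_conn N \<sigma>" using conn_ok by blast
  moreover have "bij_betw \<sigma> (Omega 2) (Omega 2)"
    using bij_betw_cong[of "Omega 2" \<sigma> id "Omega 2"] h by simp
  ultimately show "bimod_conn N \<sigma> \<and> bij_betw \<sigma> (Omega 2) (Omega 2)" by blast
qed

theorem lemma4p1:
  shows "(\<forall>N \<sigma>. (bimod_conn N \<sigma> \<and> bij_betw \<sigma> (Omega 2) (Omega 2)) \<longleftrightarrow>
            ((\<forall>\<omega>\<in>Omega 1. N \<omega> = nabla0 \<omega>) \<and> (\<forall>\<rho>\<in>Omega 2. \<sigma> \<rho> = \<rho>)))
       \<and> (\<forall>N \<sigma>. bimod_conn N \<sigma> \<longrightarrow>
            (metric_compat N \<sigma> \<longleftrightarrow> (\<forall>\<omega>\<in>Omega 1. N \<omega> = nabla0 \<omega>)))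
       \<and> (\<forall>\<omega>\<in>Omega 1. torsion nabla0 \<omega> = zero_form)
       \<and> (\<forall>\<omega>\<in>Omega 1. curvature nabla0 \<omega> = zero_form)"
proof (intro conjI allI impI ballI)
  fix N \<sigma> show "(bimod_conn N \<sigma> \<and> bij_betw \<sigma> (Omega 2) (Omega 2)) \<longleftrightarrow>
            ((\<forall>\<omega>\<in>Omega 1. N \<omega> = nabla0 \<omega>) \<and> (\<forall>\<rho>\<in>Omega 2. \<sigma> \<rho> = \<rho>))" by (rule bij_part)
next
  fix N \<sigma> assume "bimod_conn N \<sigma>"
  then show "metric_compat N \<sigma> \<longleftrightarrow> (\<forall>\<omega>\<in>Omega 1. N \<omega> = nabla0 \<omega>)" by (rule conn_part)
next
  fix \<omega> :: form assume "\<omega> \<in> Omega 1"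
  then obtain x y where w: "\<omega> = mk1 x y" by (rule O1E)
  show "torsion nabla0 \<omega> = zero_form"
    using bit_cases2[of x] bit_cases2[of y] by (auto simp: w torsion_def zero_mk2)
next
  fix \<omega> :: form assume "\<omega> \<in> Omega 1"
  then obtain x y where w: "\<omega> = mk1 x y" by (rule O1E)
  show "curvature nabla0 \<omega> = zero_form"
    using bit_cases2[of "x+y"]
    by (auto simp: w curvature_def paths2 zero_mk3 fun_eq_iff mk3_def)
qed

end
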